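(* Let $\Omega_0=(-\infty,-2)^3\subset\mathbb{R}^3$ and $\Omega=\Gamma\cdot\Omega_0$. If $\gamma\in\Gamma_{(2)}$ and $\gamma\Omega_0\cap\Omega_0\neq\emptyset$, then $\gamma$ is the identity. Consequently $\Omega$ is the disjoint union $\coprod_{\gamma\in\Gamma_{(2)}}\gamma\Omega_0$.
   Context: $\kappa(x,y,z)=x^2+y^2+z^2-xyz-2$. $\Gamma$ denotes the group of polynomial automorphisms of $\mathbb{C}^3$ generated by: all permutations of the coordinates $x,y,z$; the three sign changes $(x,y,z)\mapsto(x,-y,-z)$, $(x,y,z)\mapsto(-x,y,-z)$, $(x,y,z)\mapsto(-x,-y,z)$; and the quadratic reflection $(x,y,z)\mapsto(yz-x,y,z)$. Every element of $\Gamma$ preserves $\kappa$ and maps $\mathbb{R}^3$ to itself. $\Gamma_{(2)}$ denotes the subgroup of $\Gamma$ generated by the three sign changes and the three quadratic reflections $Q_x(x,y,z)=(yz-x,y,z)$, $Q_y(x,y,z)=(x,xz-y,z)$, $Q_z(x,y,z)=(x,y,xy-z)$; it is the kernel of the natural surjection $\Gamma\to\mathfrak{S}_3$ and has index $6$. *)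

theory Defs
  imports Complex_Main
begin

type_synonym pt = "complex \<times> complex \<times> complex"

definition kappa :: "pt \<Rightarrow> complex" where
  "kappa p = (case p of (x,y,z) \<Rightarrow> x^2 + y^2 + z^2 - x*y*z - 2)"

definition perm_maps :: "(pt \<Rightarrow> pt) set" where
  "perm_maps = {(\<lambda>(x,y,z). (x,y,z)), (\<lambda>(x,y,z). (y,x,z)), (\<lambda>(x,y,z). (z,y,x)),
                (\<lambda>(x,y,z). (x,z,y)), (\<lambda>(x,y,z). (y,z,x)), (\<lambda>(x,y,z). (z,x,y))}"

definition sign_maps :: "(pt \<Rightarrow> pt) set" where
  "sign_maps = {(\<lambda>(x,y,z). (x,-y,-z)), (\<lambda>(x,y,z). (-x,y,-z)), (\<lambda>(x,y,z). (-x,-y,z))}"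

definition Qx :: "pt \<Rightarrow> pt" where "Qx = (\<lambda>(x,y,z). (y*z - x, y, z))"
definition Qy :: "pt \<Rightarrow> pt" where "Qy = (\<lambda>(x,y,z). (x, x*z - y, z))"
definition Qz :: "pt \<Rightarrow> pt" where "Qz = (\<lambda>(x,y,z). (x, y, x*y - z))"

text \<open>Submonoid of maps generated by a set S under composition; when S is closed
  under inverses (as all our generating sets are) this is the group generated by S.\<close>
inductive_set generated :: "(pt \<Rightarrow> pt) set \<Rightarrow> (pt \<Rightarrow> pt) set" for S where
  gen_id: "id \<in> generated S"
| gen_comp: "g \<in> S \<Longrightarrow> h \<in> generated S \<Longrightarrow> g \<circ> h \<in> generated S"

definition Gamma :: "(pt \<Rightarrow> pt) set" where
  "Gamma = generated (perm_maps \<union> sign_maps \<union> {Qx})"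

definition Gamma2 :: "(pt \<Rightarrow> pt) set" where
  "Gamma2 = generated (sign_maps \<union> {Qx, Qy, Qz})"

definition Omega0 :: "pt set" where
  "Omega0 = {(complex_of_real a, complex_of_real b, complex_of_real c) | a b c.
               a < -2 \<and> b < -2 \<and> c < -2}"

definition Omega :: "pt set" where
  "Omega = (\<Union>\<gamma>\<in>Gamma. \<gamma> ` Omega0)"

end

theory Submission
  imports Defs
begin


lemma gen_closed: "g \<in> generated S \<Longrightarrow> h \<in> generated S \<Longrightarrow> g \<circ> h \<in> generated S"
  by (induction g rule: generated.induct) (auto simp: comp_assoc intro: generated.intros)

lemma gen_single: "g \<in> S \<Longrightarrow> g \<in> generated S"
  using generated.gen_comp[OF _ generated.gen_id] by simp

lemma gen_sub: "g \<in> generated S \<Longrightarrow> S \<subseteq> generated T \<Longrightarrow> g \<in> generated T"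
  by (induction g rule: generated.induct) (auto intro: generated.intros gen_closed)

definition tau :: "pt \<Rightarrow> pt" where "tau = (\<lambda>(x,y,z). (y,x,z))"
definition rho :: "pt \<Rightarrow> pt" where "rho = (\<lambda>(x,y,z). (z,y,x))"

lemma Qy_eq: "Qy = tau \<circ> Qx \<circ> tau"
  by (auto simp: fun_eq_iff Qx_def Qy_def tau_def mult.commute)
lemma Qz_eq: "Qz = rho \<circ> Qx \<circ> rho"
  by (auto simp: fun_eq_iff Qx_def Qz_def rho_def mult.commute)

lemma Gamma2_sub: "Gamma2 \<subseteq> Gamma"
proof
  fix g assume "g \<in> Gamma2"
  have t: "tau \<in> Gamma" "rho \<in> Gamma" "Qx \<in> Gamma"
    unfolding Gamma_def by (auto intro!: gen_single simp: perm_maps_def tau_def rho_def)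
  have "sign_maps \<union> {Qx, Qy, Qz} \<subseteq> Gamma"
    using t unfolding Qy_eq Qz_eq by (auto simp: Gamma_def intro: gen_closed gen_single)
  then show "g \<in> Gamma" using \<open>g \<in> Gamma2\<close> unfolding Gamma2_def Gamma_def
    by (auto intro: gen_sub)
qed

lemma perm_comm: "q \<in> perm_maps \<Longrightarrow> s \<in> sign_maps \<union> {Qx, Qy, Qz} \<Longrightarrow>
   \<exists>s'\<in>sign_maps \<union> {Qx, Qy, Qz}. q \<circ> s = s' \<circ> q"
  unfolding perm_maps_def sign_maps_def Qx_def Qy_def Qz_def
  by (auto simp: fun_eq_iff ac_simps)

lemma perm_comm_gen: "g \<in> Gamma2 \<Longrightarrow> q \<in> perm_maps \<Longrightarrow> \<exists>g'\<in>Gamma2. q \<circ> g = g' \<circ> q"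
  unfolding Gamma2_def
proof (induction g rule: generated.induct)
  case gen_id
  then show ?case by (auto intro!: bexI[of _ id] generated.gen_id)
next
  case (gen_comp s h)
  obtain s' where s': "s' \<in> sign_maps \<union> {Qx, Qy, Qz}" "q \<circ> s = s' \<circ> q"
    using perm_comm gen_comp by blast
  obtain h' where h': "h' \<in> generated (sign_maps \<union> {Qx, Qy, Qz})" "q \<circ> h = h' \<circ> q"
    using gen_comp by blast
  have "q \<circ> (s \<circ> h) = (s' \<circ> h') \<circ> q"
    by (metis comp_assoc s'(2) h'(2))
  moreover have "s' \<circ> h' \<in> generated (sign_maps \<union> {Qx, Qy, Qz})" using s' h' by (auto intro: generated.gen_comp)
  ultimately show ?case by blast
qed

lemma perm_Omega0: "p \<in> generated perm_maps \<Longrightarrow> p ` Omega0 \<subseteq> Omega0"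
proof (induction p rule: generated.induct)
  case gen_id then show ?case by simp
next
  case (gen_comp q h)
  have "q ` Omega0 \<subseteq> Omega0"
    using gen_comp(1) unfolding perm_maps_def Omega0_def by (elim insertE; force)
  then show ?case using gen_comp by (auto simp: image_comp[symmetric]) 
qed

lemma Gamma_decomp: "g \<in> Gamma \<Longrightarrow> \<exists>g'\<in>Gamma2. \<exists>p\<in>generated perm_maps. g = g' \<circ> p"
  unfolding Gamma_def
proof (induction g rule: generated.induct)
  case gen_id
  then show ?case unfolding Gamma2_def by (auto intro!: bexI[of _ id] generated.gen_id)
next
  case (gen_comp s h)
  then obtain g' p where gp: "g' \<in> Gamma2" "p \<in> generated perm_maps" "h = g' \<circ> p" by blast
  show ?case
  proof (cases "s \<in> perm_maps")
    case True
    then obtain g'' where "g'' \<in> Gamma2" "s \<circ> g' = g'' \<circ> s" using perm_comm_gen gp True by blast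
    moreover have "s \<circ> p \<in> generated perm_maps" using True gp by (auto intro: generated.gen_comp)
    moreover have "s \<circ> h = g'' \<circ> (s \<circ> p)" using gp \<open>s \<circ> g' = g'' \<circ> s\<close> by (metis comp_assoc)
    ultimately show ?thesis by blast
  next
    case False
    then have "s \<in> sign_maps \<union> {Qx, Qy, Qz}" using gen_comp by auto
    then have "s \<circ> g' \<in> Gamma2" using gp unfolding Gamma2_def by (auto intro: generated.gen_comp)
    moreover have "s \<circ> h = (s \<circ> g') \<circ> p" using gp by (simp add: comp_assoc)
    ultimately show ?thesis using gp by blast
  qed
qed

lemma part2: "Omega = (\<Union>\<gamma>\<in>Gamma2. \<gamma> ` Omega0)"
proof
  show "Omega \<subseteq> (\<Union>\<gamma>\<in>Gamma2. \<gamma> ` Omega0)"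
  proof
    fix x assume "x \<in> Omega"
    then obtain g a where "g \<in> Gamma" "a \<in> Omega0" "x = g a" unfolding Omega_def by auto
    then obtain g' p where "g' \<in> Gamma2" "p \<in> generated perm_maps" "g = g' \<circ> p"
      using Gamma_decomp by blast
    then show "x \<in> (\<Union>\<gamma>\<in>Gamma2. \<gamma> ` Omega0)"
    proof -
      have "p a \<in> Omega0" using perm_Omega0 \<open>p \<in> generated perm_maps\<close> \<open>a \<in> Omega0\<close> by blast
      then show ?thesis using \<open>x = g a\<close> \<open>g = g' \<circ> p\<close> \<open>g' \<in> Gamma2\<close> by auto
    qed
  qed
  show "(\<Union>\<gamma>\<in>Gamma2. \<gamma> ` Omega0) \<subseteq> Omega"
    using Gamma2_sub unfolding Omega_def by auto
qed



definition Qc :: "nat \<Rightarrow> pt \<Rightarrow> pt" where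
  "Qc i = (if i = 0 then Qx else if i = 1 then Qy else Qz)"
definition s1 :: "pt \<Rightarrow> pt" where "s1 = (\<lambda>(x,y,z). (x,-y,-z))"
definition s2 :: "pt \<Rightarrow> pt" where "s2 = (\<lambda>(x,y,z). (-x,y,-z))"
definition s3 :: "pt \<Rightarrow> pt" where "s3 = (\<lambda>(x,y,z). (-x,-y,z))"
definition Sc :: "nat \<Rightarrow> pt \<Rightarrow> pt" where
  "Sc k = (if k = 0 then id else if k = 1 then s1 else if k = 2 then s2 else s3)"

fun wrd :: "nat list \<Rightarrow> pt \<Rightarrow> pt" where
  "wrd [] = id"
| "wrd (i # r) = Qc i \<circ> wrd r"

fun red :: "nat list \<Rightarrow> bool" where
  "red [] = True"
| "red [i] = (i < 3)"
| "red (i # j # r) = (i < 3 \<and> i \<noteq> j \<and> red (j # r))"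

lemma sign_maps_eq: "sign_maps = {s1, s2, s3}"
  by (simp add: sign_maps_def s1_def s2_def s3_def)

lemma sprod:
  "s1 \<circ> s1 = id" "s2 \<circ> s2 = id" "s3 \<circ> s3 = id"
  "s1 \<circ> s2 = s3" "s2 \<circ> s1 = s3" "s1 \<circ> s3 = s2" "s3 \<circ> s1 = s2"
  "s2 \<circ> s3 = s1" "s3 \<circ> s2 = s1"
  by (auto simp: fun_eq_iff s1_def s2_def s3_def)

lemma sign_table: "t \<in> sign_maps \<Longrightarrow> k < 4 \<Longrightarrow> \<exists>k'<4. t \<circ> Sc k = Sc k'"
proof -
  assume t: "t \<in> sign_maps" and k: "k < 4"
  have S: "Sc 0 = id" "Sc 1 = s1" "Sc 2 = s2" "Sc 3 = s3" by (auto simp: Sc_def)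
  have "k = 0 \<or> k = 1 \<or> k = 2 \<or> k = 3" using k by auto
  then have "t \<circ> Sc k \<in> {id, s1, s2, s3}" using t unfolding sign_maps_eq
    by (elim disjE insertE) (simp_all only: S sprod comp_id insert_iff empty_iff simp_thms)
  then show ?thesis
    apply (simp only: insert_iff empty_iff simp_thms)
    apply (elim disjE)
       apply (rule exI[of _ 0]; simp add: Sc_def)
      apply (rule exI[of _ 1]; simp add: Sc_def)
     apply (rule exI[of _ 2]; simp add: Sc_def)
    apply (rule exI[of _ 3]; simp add: Sc_def)
    done
qed

lemma QS_comm: "Qc i \<circ> Sc k = Sc k \<circ> Qc i"
  by (auto simp: fun_eq_iff Qc_def Sc_def s1_def s2_def s3_def Qx_def Qy_def Qz_def algebra_simps)

lemma QQ: "Qc i \<circ> Qc i = id"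
  by (auto simp: fun_eq_iff Qc_def Qx_def Qy_def Qz_def algebra_simps)

lemma NF: "g \<in> Gamma2 \<Longrightarrow> \<exists>k r. k < 4 \<and> red r \<and> g = Sc k \<circ> wrd r"
  unfolding Gamma2_def
proof (induction g rule: generated.induct)
  case gen_id
  then show ?case by (auto intro!: exI[of _ 0] exI[of _ "[]"] simp: Sc_def)
next
  case (gen_comp s h)
  then obtain k r where kr: "k < 4" "red r" "h = Sc k \<circ> wrd r" by blast
  show ?case
  proof (cases "s \<in> sign_maps")
    case True
    then obtain k' where "k' < 4" "s \<circ> Sc k = Sc k'" using sign_table kr by blast
    then have "s \<circ> h = Sc k' \<circ> wrd r" using kr by (metis comp_assoc)
    then show ?thesis using kr \<open>k' < 4\<close> by blast
  next
    case False
    have Q: "Qc 0 = Qx" "Qc 1 = Qy" "Qc 2 = Qz" by (auto simp: Qc_def)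
    have "s = Qx \<or> s = Qy \<or> s = Qz" using gen_comp(1) False by auto
    then have "\<exists>i<3. s = Qc i"
      apply (elim disjE)
        apply (rule exI[of _ 0]; simp add: Qc_def)
       apply (rule exI[of _ 1]; simp add: Qc_def)
      apply (rule exI[of _ 2]; simp add: Qc_def)
      done
    then obtain i where i: "i < 3" "s = Qc i" by blast
    have sh: "s \<circ> h = Sc k \<circ> (Qc i \<circ> wrd r)" using kr i QS_comm by (metis comp_assoc)
    show ?thesis
    proof (cases "r \<noteq> [] \<and> hd r = i")
      case True
      then obtain r' where r': "r = i # r'" by (cases r) auto
      have "Qc i \<circ> wrd r = wrd r'" using r' QQ by (simp add: comp_assoc[symmetric])
      moreover have "red r'" using kr(2) r' by (cases r') auto
      ultimately show ?thesis using sh kr by metis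
    next
      case False
      have "red (i # r)" using False kr(2) i by (cases r) auto
      moreover have "Qc i \<circ> wrd r = wrd (i # r)" by simp
      ultimately show ?thesis using sh kr by metis
    qed
  qed
qed



type_synonym rpt = "real \<times> real \<times> real"

definition R :: "rpt \<Rightarrow> pt" where
  "R = (\<lambda>(a,b,c). (complex_of_real a, complex_of_real b, complex_of_real c))"

definition Qr :: "nat \<Rightarrow> rpt \<Rightarrow> rpt" where
  "Qr i = (if i = 0 then (\<lambda>(a,b,c). (b*c - a, b, c)) else if i = 1 then (\<lambda>(a,b,c). (a, a*c - b, c))
           else (\<lambda>(a,b,c). (a, b, a*b - c)))"

definition Sr :: "nat \<Rightarrow> rpt \<Rightarrow> rpt" where
  "Sr k = (if k = 0 then id else if k = 1 then (\<lambda>(a,b,c). (a,-b,-c)) else if k = 2 then (\<lambda>(a,b,c). (-a,b,-c))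
           else (\<lambda>(a,b,c). (-a,-b,c)))"

fun wrdr :: "nat list \<Rightarrow> rpt \<Rightarrow> rpt" where
  "wrdr [] = id"
| "wrdr (i # r) = Qr i \<circ> wrdr r"

definition box :: "rpt \<Rightarrow> bool" where
  "box = (\<lambda>(a,b,c). a < -2 \<and> b < -2 \<and> c < -2)"

definition prodr :: "rpt \<Rightarrow> real" where
  "prodr = (\<lambda>(a,b,c). a*b*c)"

definition pinv :: "nat \<Rightarrow> rpt \<Rightarrow> bool" where
  "pinv i = (\<lambda>(a,b,c). 2 < \<bar>a\<bar> \<and> 2 < \<bar>b\<bar> \<and> 2 < \<bar>c\<bar> \<and> 0 < a*b*c \<and>
     (if i = 0 then \<bar>b\<bar> < \<bar>a\<bar> \<and> \<bar>c\<bar> < \<bar>a\<bar> else if i = 1 then \<bar>a\<bar> < \<bar>b\<bar> \<and> \<bar>c\<bar> < \<bar>b\<bar>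
      else \<bar>a\<bar> < \<bar>c\<bar> \<and> \<bar>b\<bar> < \<bar>c\<bar>))"

lemma R_Q: "Qc i (R p) = R (Qr i p)"
  by (cases p) (auto simp: R_def Qr_def Qc_def Qx_def Qy_def Qz_def)

lemma R_S: "Sc k (R p) = R (Sr k p)"
  by (cases p) (auto simp: R_def Sr_def Sc_def s1_def s2_def s3_def)

lemma R_w: "wrd r (R p) = R (wrdr r p)"
  by (induction r) (auto simp: R_Q)

lemma R_inj: "R p = R q \<Longrightarrow> p = q"
  by (cases p; cases q) (auto simp: R_def)

lemma Omega0_R: "Omega0 = R ` {p. box p}"
  unfolding Omega0_def box_def R_def by (auto simp: image_def)

lemma L:
  fixes m n t :: real
  assumes "\<bar>t\<bar> < \<bar>m\<bar>" "2 < \<bar>n\<bar>" "0 < m*n*t"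
  shows "\<bar>m\<bar> < \<bar>m*n - t\<bar> \<and> 0 < (m*n - t)*(m*n)"
proof -
  have "0 < \<bar>m\<bar>" using assms(1) by linarith
  then have "\<bar>m\<bar> * 2 < \<bar>m\<bar> * \<bar>n\<bar>" using assms(2) by simp
  then have A: "2 * \<bar>m\<bar> < \<bar>m*n\<bar>" by (simp add: abs_mult)
  show ?thesis
  proof (cases "0 < m*n")
    case True
    then have "0 < t" using assms(3) by (metis zero_less_mult_pos)
    then show ?thesis using A True assms(1) by auto
  next
    case False
    have "m*n \<noteq> 0" using assms(3) by (metis mult_zero_left less_irrefl)
    then have "m*n < 0" using False by linarith
    then have "t < 0" using assms(3) by (metis mult_neg_pos mult_neg_neg not_less_iff_gr_or_eq mult_zero_right less_irrefl less_asym)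
    then have "m*n - t < 0" using A \<open>m*n < 0\<close> assms(1) by auto
    then show ?thesis using A \<open>m*n < 0\<close> assms(1) \<open>t < 0\<close> by (auto simp: mult_neg_neg)
  qed
qed

lemma step:
  assumes "pinv i q" "j < 3" "j \<noteq> i" "i < 3"
  shows "pinv j (Qr j q)"
proof -
  obtain a b c where q: "q = (a,b,c)" by (cases q)
  have ij: "(i = 0 \<and> j = 1) \<or> (i = 0 \<and> j = 2) \<or> (i = 1 \<and> j = 0) \<or> (i = 1 \<and> j = 2) \<or>
            (i = 2 \<and> j = 0) \<or> (i = 2 \<and> j = 1)" using assms by auto
  have I: "2 < \<bar>a\<bar>" "2 < \<bar>b\<bar>" "2 < \<bar>c\<bar>" "0 < a*b*c" using assms(1) by (auto simp: pinv_def q)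
  from ij show ?thesis
  proof (elim disjE conjE)
    assume "i = 0" "j = 1"
    then have M: "\<bar>b\<bar> < \<bar>a\<bar>" "\<bar>c\<bar> < \<bar>a\<bar>" using assms(1) by (auto simp: pinv_def q)
    have "0 < a*c*b" using I by (simp add: ac_simps)
    from L[OF M(1) I(3) this] have "\<bar>a\<bar> < \<bar>a*c - b\<bar>" "0 < (a*c - b)*(a*c)" by auto
    then show ?thesis using I M \<open>j = 1\<close> by (auto simp: pinv_def q Qr_def ac_simps)
  next
    assume "i = 0" "j = 2"
    then have M: "\<bar>b\<bar> < \<bar>a\<bar>" "\<bar>c\<bar> < \<bar>a\<bar>" using assms(1) by (auto simp: pinv_def q)
    have "0 < a*b*c" using I by (simp add: ac_simps)
    from L[OF M(2) I(2) this] have "\<bar>a\<bar> < \<bar>a*b - c\<bar>" "0 < (a*b - c)*(a*b)" by auto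
    then show ?thesis using I M \<open>j = 2\<close> by (auto simp: pinv_def q Qr_def ac_simps)
  next
    assume "i = 1" "j = 0"
    then have M: "\<bar>a\<bar> < \<bar>b\<bar>" "\<bar>c\<bar> < \<bar>b\<bar>" using assms(1) by (auto simp: pinv_def q)
    have "0 < b*c*a" using I by (simp add: ac_simps)
    from L[OF M(1) I(3) this] have "\<bar>b\<bar> < \<bar>b*c - a\<bar>" "0 < (b*c - a)*(b*c)" by auto
    then show ?thesis using I M \<open>j = 0\<close> by (auto simp: pinv_def q Qr_def ac_simps)
  next
    assume "i = 1" "j = 2"
    then have M: "\<bar>a\<bar> < \<bar>b\<bar>" "\<bar>c\<bar> < \<bar>b\<bar>" using assms(1) by (auto simp: pinv_def q)
    have "0 < b*a*c" using I by (simp add: ac_simps)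
    from L[OF M(2) I(1) this] have "\<bar>b\<bar> < \<bar>b*a - c\<bar>" "0 < (b*a - c)*(b*a)" by auto
    then show ?thesis using I M \<open>j = 2\<close> by (auto simp: pinv_def q Qr_def ac_simps)
  next
    assume "i = 2" "j = 0"
    then have M: "\<bar>a\<bar> < \<bar>c\<bar>" "\<bar>b\<bar> < \<bar>c\<bar>" using assms(1) by (auto simp: pinv_def q)
    have "0 < c*b*a" using I by (simp add: ac_simps)
    from L[OF M(1) I(2) this] have "\<bar>c\<bar> < \<bar>c*b - a\<bar>" "0 < (c*b - a)*(c*b)" by auto
    then show ?thesis using I M \<open>j = 0\<close> by (auto simp: pinv_def q Qr_def ac_simps)
  next
    assume "i = 2" "j = 1"
    then have M: "\<bar>a\<bar> < \<bar>c\<bar>" "\<bar>b\<bar> < \<bar>c\<bar>" using assms(1) by (auto simp: pinv_def q)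
    have "0 < c*a*b" using I by (simp add: ac_simps)
    from L[OF M(2) I(1) this] have "\<bar>c\<bar> < \<bar>c*a - b\<bar>" "0 < (c*a - b)*(c*a)" by auto
    then show ?thesis using I M \<open>j = 1\<close> by (auto simp: pinv_def q Qr_def ac_simps)
  qed
qed

lemma base:
  assumes "box p" "i < 3"
  shows "pinv i (Qr i p)"
proof -
  obtain a b c where p: "p = (a,b,c)" by (cases p)
  have B: "a < -2" "b < -2" "c < -2" using assms(1) by (auto simp: box_def p)
  have "b*c > (-2)*c" using B by (intro mult_strict_right_mono_neg) auto
  moreover have "b*c > b*(-2)" using B by (intro mult_strict_left_mono_neg) auto
  moreover have "a*c > (-2)*c" using B by (intro mult_strict_right_mono_neg) auto
  moreover have "a*c > a*(-2)" using B by (intro mult_strict_left_mono_neg) auto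
  moreover have "a*b > (-2)*b" using B by (intro mult_strict_right_mono_neg) auto
  moreover have "a*b > a*(-2)" using B by (intro mult_strict_left_mono_neg) auto
  ultimately have X: "b*c > 4" "a*c > 4" "a*b > 4" "b*c > -2*c" "b*c > -2*b"
     "a*c > -2*c" "a*c > -2*a" "a*b > -2*b" "a*b > -2*a" using B by linarith+
  have A: "\<bar>a\<bar> = -a" "\<bar>b\<bar> = -b" "\<bar>c\<bar> = -c" using B by auto
  have "i = 0 \<or> i = 1 \<or> i = 2" using assms(2) by auto
  then show ?thesis
  proof (elim disjE)
    assume "i = 0"
    have "0 < (b*c - a)*(b*c)" by (rule mult_pos_pos; use X B in linarith)
    moreover have "\<bar>b*c - a\<bar> = b*c - a" by (rule abs_of_pos; use X B in linarith)
    ultimately show ?thesis using X B A \<open>i = 0\<close> unfolding pinv_def p Qr_def by (simp add: ac_simps)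
  next
    assume "i = 1"
    have "0 < (a*c - b)*(a*c)" by (rule mult_pos_pos; use X B in linarith)
    moreover have "\<bar>a*c - b\<bar> = a*c - b" by (rule abs_of_pos; use X B in linarith)
    ultimately show ?thesis using X B A \<open>i = 1\<close> unfolding pinv_def p Qr_def by (simp add: ac_simps)
  next
    assume "i = 2"
    have "0 < (a*b - c)*(a*b)" by (rule mult_pos_pos; use X B in linarith)
    moreover have "\<bar>a*b - c\<bar> = a*b - c" by (rule abs_of_pos; use X B in linarith)
    ultimately show ?thesis using X B A \<open>i = 2\<close> unfolding pinv_def p Qr_def by (simp add: ac_simps)
  qed
qed

lemma word_inv: "red (i # r) \<Longrightarrow> box p \<Longrightarrow> pinv i (wrdr (i # r) p)"
proof (induction r arbitrary: i)
  case Nil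
  then show ?case using base by simp
next
  case (Cons j r)
  then have "pinv j (wrdr (j # r) p)" by simp
  moreover have "i < 3" "i \<noteq> j" "j < 3" using Cons.prems by (auto elim: red.elims)
  ultimately have "pinv i (Qr i (wrdr (j # r) p))" using step by blast
  then show ?case by simp
qed

lemma inv_pos: "pinv i q \<Longrightarrow> 0 < prodr q"
  by (cases q) (auto simp: pinv_def prodr_def)

lemma prod_S: "prodr (Sr k q) = prodr q"
  by (cases q) (auto simp: prodr_def Sr_def)

lemma box_neg: "box q \<Longrightarrow> prodr q < 0"
proof -
  assume "box q"
  obtain a b c where q: "q = (a,b,c)" by (cases q)
  have "a < 0" "b < 0" "c < 0" using \<open>box q\<close> by (auto simp: box_def q)
  then have "0 < a*b" by (simp add: mult_neg_neg)
  then have "a*b*c < 0" using \<open>c < 0\<close> by (simp add: mult_pos_neg)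
  then show ?thesis by (simp add: prodr_def q)
qed

lemma box_S: "box q \<Longrightarrow> k < 4 \<Longrightarrow> box (Sr k q) \<Longrightarrow> k = 0"
  by (cases q) (auto simp: box_def Sr_def split: if_splits)

lemma part1: "\<gamma> \<in> Gamma2 \<Longrightarrow> \<gamma> ` Omega0 \<inter> Omega0 \<noteq> {} \<Longrightarrow> \<gamma> = id"
proof -
  assume g: "\<gamma> \<in> Gamma2" and ne: "\<gamma> ` Omega0 \<inter> Omega0 \<noteq> {}"
  obtain k r where kr: "k < 4" "red r" "\<gamma> = Sc k \<circ> wrd r" using NF g by blast
  obtain x where x: "x \<in> \<gamma> ` Omega0" "x \<in> Omega0" using ne by blast
  obtain p where p: "box p" "x = \<gamma> (R p)" using x(1) unfolding Omega0_R by auto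
  obtain p' where p': "box p'" "x = R p'" using x(2) unfolding Omega0_R by auto
  have pp: "box p" "box p'" "\<gamma> (R p) = R p'" using p p' by auto
  have "\<gamma> (R p) = R (Sr k (wrdr r p))" using kr by (simp add: R_w R_S)
  then have p': "p' = Sr k (wrdr r p)" using pp R_inj by metis
  show ?thesis
  proof (cases r)
    case Nil
    then have "box (Sr k p)" using p' pp by simp
    then have "k = 0" using box_S pp kr by blast
    then show ?thesis using kr Nil by (simp add: Sc_def)
  next
    case (Cons i r')
    then have "pinv i (wrdr r p)" using word_inv kr pp by simp
    then have "0 < prodr p'" using p' inv_pos prod_S by simp
    then show ?thesis using box_neg pp by fastforce
  qed
qed

lemma gen_invol: "s \<in> sign_maps \<union> {Qx, Qy, Qz} \<Longrightarrow> s \<circ> s = id"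
  unfolding sign_maps_def Qx_def Qy_def Qz_def by (auto simp: fun_eq_iff algebra_simps)

lemma Gamma2_inv: "g \<in> Gamma2 \<Longrightarrow> \<exists>h\<in>Gamma2. h \<circ> g = id \<and> g \<circ> h = id"
  unfolding Gamma2_def
proof (induction g rule: generated.induct)
  case gen_id
  then show ?case by (metis comp_id generated.gen_id)
next
  case (gen_comp s g)
  then obtain h where h: "h \<in> generated (sign_maps \<union> {Qx, Qy, Qz})" "h \<circ> g = id" "g \<circ> h = id" by blast
  have ss: "s \<circ> s = id" using gen_invol gen_comp by blast
  have "h \<circ> s \<in> generated (sign_maps \<union> {Qx, Qy, Qz})"
    using gen_closed[OF h(1) gen_single[OF gen_comp(1)]] .
  moreover have "(h \<circ> s) \<circ> (s \<circ> g) = id" using h ss by (metis comp_assoc comp_id)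
  moreover have "(s \<circ> g) \<circ> (h \<circ> s) = id" using h ss by (metis comp_assoc comp_id)
  ultimately show ?case by blast
qed

lemma Gamma2_closed: "g \<in> Gamma2 \<Longrightarrow> h \<in> Gamma2 \<Longrightarrow> g \<circ> h \<in> Gamma2"
  unfolding Gamma2_def by (rule gen_closed)

lemma part3: "\<gamma> \<in> Gamma2 \<Longrightarrow> \<delta> \<in> Gamma2 \<Longrightarrow> \<gamma> \<noteq> \<delta> \<Longrightarrow> \<gamma> ` Omega0 \<inter> \<delta> ` Omega0 = {}"
proof (rule ccontr)
  assume g: "\<gamma> \<in> Gamma2" and d: "\<delta> \<in> Gamma2" and ne: "\<gamma> \<noteq> \<delta>" and
    "\<gamma> ` Omega0 \<inter> \<delta> ` Omega0 \<noteq> {}"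
  then obtain a b where ab: "a \<in> Omega0" "b \<in> Omega0" "\<gamma> a = \<delta> b" by blast
  obtain h where h: "h \<in> Gamma2" "h \<circ> \<delta> = id" "\<delta> \<circ> h = id" using Gamma2_inv d by blast
  have "(h \<circ> \<gamma>) a = b" using ab h by (metis comp_apply id_apply)
  then have "(h \<circ> \<gamma>) ` Omega0 \<inter> Omega0 \<noteq> {}" using ab by blast
  then have "h \<circ> \<gamma> = id" using part1 Gamma2_closed h g by blast
  then have "\<gamma> = \<delta>" using h by (metis comp_assoc comp_id id_comp)
  then show False using ne by simp
qed

theorem mainTheorem8:
  shows "(\<forall>\<gamma>\<in>Gamma2. \<gamma> ` Omega0 \<inter> Omega0 \<noteq> {} \<longrightarrow> \<gamma> = id)
       \<and> Omega = (\<Union>\<gamma>\<in>Gamma2. \<gamma> ` Omega0)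
       \<and> (\<forall>\<gamma>\<in>Gamma2. \<forall>\<delta>\<in>Gamma2. \<gamma> \<noteq> \<delta> \<longrightarrow> \<gamma> ` Omega0 \<inter> \<delta> ` Omega0 = {})"
  using part1 part2 part3 by blast

end
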